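(* Let $a_1,a_2,a_3,a_4,a_5$ and $\alpha_1,\alpha_2,\alpha_3,\alpha_4,\alpha_5$ be positive real numbers with $\sum_{i=1}^5\alpha_i=\pi$ and $a_1\le a_2\le a_3\le a_4\le a_5$. Then $$\sum_{i=1}^5 a_i\cos\alpha_i\;\le\;\frac{1+\sqrt5}{4}\cdot\frac{1}{a_1a_2a_3a_4a_5}\left(a_1^2a_5^2a_2^2+a_5^2a_2^2a_3^2+a_2^2a_3^2a_4^2+a_3^2a_4^2a_1^2+a_4^2a_1^2a_5^2\right).$$ *)

theory Defs
  imports Complex_Main
begin

end

theory Submission
  imports Defs
begin

lemma qpos:
  fixes y1 y2 y3 y4 y5 :: real
  shows "y1*y2 + y2*y3 + y3*y4 + y4*y5 - y5*y1
     \<le> (1 + sqrt 5) / 4 * (y1^2 + y2^2 + y3^2 + y4^2 + y5^2)"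
proof -
  define s where "s = sqrt (5::real)"
  have s2: "s^2 = 5" unfolding s_def by simp
  have s1: "s \<ge> 1" unfolding s_def by (simp add: real_le_rsqrt)
  have eq0: "4 * (1 + s) * (y1^2 + y2^2 + y3^2 + y4^2 + y5^2) - 16 * (y1*y2 + y2*y3 + y3*y4 + y4*y5 - y5*y1)
     = (1+s) * (2*y1 + (1-s)*y2 + (s-1)*y5)^2 + 2 * (2*y2 - 2*y3 + (s-1)*y5)^2
       + (s-1) * (2*y3 - (1+s)*y4 + 2*y5)^2"
  proof -
    have t1: "(1+s) * (2*y1 + (1-s)*y2 + (s-1)*y5)^2 = 4*(1+s)*y1^2 - 16*y1*(y2-y5) + 4*(s-1)*(y2-y5)^2"
    proof -
      have "(1+s) * (2*y1 + (1-s)*y2 + (s-1)*y5)^2 = 4*(1+s)*y1^2 + 4*(1-s^2)*y1*(y2-y5) + (1-s^2)*(1-s)*(y2-y5)^2"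
        by algebra
      then show ?thesis unfolding s2 by algebra
    qed
    have t2: "2 * (2*y2 - 2*y3 + (s-1)*y5)^2 = 8*(y2-y3)^2 + 8*(s-1)*(y2-y3)*y5 + 2*(6-2*s)*y5^2"
    proof -
      have "2 * (2*y2 - 2*y3 + (s-1)*y5)^2 = 8*(y2-y3)^2 + 8*(s-1)*(y2-y3)*y5 + 2*(s^2 + 1 - 2*s)*y5^2"
        by algebra
      then show ?thesis unfolding s2 by algebra
    qed
    have t3: "(s-1) * (2*y3 - (1+s)*y4 + 2*y5)^2 = 4*(s-1)*(y3+y5)^2 - 16*(y3+y5)*y4 + 4*(1+s)*y4^2"
    proof -
      have "(s-1) * (2*y3 - (1+s)*y4 + 2*y5)^2 = 4*(s-1)*(y3+y5)^2 - 4*(s^2-1)*(y3+y5)*y4 + (s^2-1)*(1+s)*y4^2"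
        by algebra
      then show ?thesis unfolding s2 by algebra
    qed
    show ?thesis unfolding t1 t2 t3 by algebra
  qed
  have "0 \<le> (1+s) * (2*y1 + (1-s)*y2 + (s-1)*y5)^2 + 2 * (2*y2 - 2*y3 + (s-1)*y5)^2
       + (s-1) * (2*y3 - (1+s)*y4 + 2*y5)^2"
    using s1 by (intro add_nonneg_nonneg mult_nonneg_nonneg) auto
  then have eq: "0 \<le> (1 + s) / 4 * (y1^2 + y2^2 + y3^2 + y4^2 + y5^2) - (y1*y2 + y2*y3 + y3*y4 + y4*y5 - y5*y1)"
    using eq0 by (simp add: field_simps)
  then show ?thesis using eq unfolding s_def by linarith
qed

lemma cyc:
  fixes x1 x2 x3 x4 x5 b1 b2 b3 b4 b5 :: real
  assumes "b1 + b2 + b3 + b4 + b5 = pi"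
  shows "x1*x2*cos b1 + x2*x3*cos b2 + x3*x4*cos b3 + x4*x5*cos b4 + x5*x1*cos b5
     \<le> (1 + sqrt 5) / 4 * (x1^2 + x2^2 + x3^2 + x4^2 + x5^2)"
proof -
  define t2 where "t2 = b1"
  define t3 where "t3 = b1 + b2"
  define t4 where "t4 = b1 + b2 + b3"
  define t5 where "t5 = b1 + b2 + b3 + b4"
  have e5: "b5 = pi - t5" using assms unfolding t5_def by linarith
  have c1: "cos b1 = 1 * cos t2 + 0 * sin t2" unfolding t2_def by simp
  have c2: "cos b2 = cos t3 * cos t2 + sin t3 * sin t2"
    using cos_diff[of t3 t2] unfolding t2_def t3_def by simp
  have c3: "cos b3 = cos t4 * cos t3 + sin t4 * sin t3"
    using cos_diff[of t4 t3] unfolding t4_def t3_def by simp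
  have c4: "cos b4 = cos t5 * cos t4 + sin t5 * sin t4"
    using cos_diff[of t5 t4] unfolding t5_def t4_def by simp
  have c5: "cos b5 = - cos t5" using e5 by simp
  have sq: "x^2 = (x * cos t)^2 + (x * sin t)^2" for x t :: real
  proof -
    have "(x * cos t)^2 + (x * sin t)^2 = x^2 * ((sin t)^2 + (cos t)^2)"
      by algebra
    moreover have "x^2 * ((sin t)^2 + (cos t)^2) = x^2" by simp
    ultimately show ?thesis by linarith
  qed
  have L: "x1*x2*cos b1 + x2*x3*cos b2 + x3*x4*cos b3 + x4*x5*cos b4 + x5*x1*cos b5
    = (x1*(x2*cos t2) + x2*cos t2 * (x3*cos t3) + x3*cos t3*(x4*cos t4) + x4*cos t4*(x5*cos t5) - x5*cos t5*x1)
    + (0*(x2*sin t2) + x2*sin t2*(x3*sin t3) + x3*sin t3*(x4*sin t4) + x4*sin t4*(x5*sin t5) - x5*sin t5*0)"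
    unfolding c1 c2 c3 c4 c5 by (simp add: algebra_simps)
  have R: "x1^2 + x2^2 + x3^2 + x4^2 + x5^2 =
     (x1^2 + (x2*cos t2)^2 + (x3*cos t3)^2 + (x4*cos t4)^2 + (x5*cos t5)^2)
     + (0^2 + (x2*sin t2)^2 + (x3*sin t3)^2 + (x4*sin t4)^2 + (x5*sin t5)^2)"
    using sq[of x2 t2] sq[of x3 t3] sq[of x4 t4] sq[of x5 t5] by simp
  show ?thesis unfolding L R
    using add_mono[OF qpos[of x1 "x2*cos t2" "x3*cos t3" "x4*cos t4" "x5*cos t5"]
      qpos[of 0 "x2*sin t2" "x3*sin t3" "x4*sin t4" "x5*sin t5"]]
    by (simp only: distrib_left)
qed
theorem theorem1:
  fixes a1 a2 a3 a4 a5 \<alpha>1 \<alpha>2 \<alpha>3 \<alpha>4 \<alpha>5 :: real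
  assumes "a1 > 0" "a2 > 0" "a3 > 0" "a4 > 0" "a5 > 0"
    and "\<alpha>1 > 0" "\<alpha>2 > 0" "\<alpha>3 > 0" "\<alpha>4 > 0" "\<alpha>5 > 0"
    and "\<alpha>1 + \<alpha>2 + \<alpha>3 + \<alpha>4 + \<alpha>5 = pi"
    and "a1 \<le> a2" "a2 \<le> a3" "a3 \<le> a4" "a4 \<le> a5"
  shows "a1 * cos \<alpha>1 + a2 * cos \<alpha>2 + a3 * cos \<alpha>3 + a4 * cos \<alpha>4 + a5 * cos \<alpha>5
    \<le> (1 + sqrt 5) / 4 * (1 / (a1 * a2 * a3 * a4 * a5)) *
       (a1^2 * a5^2 * a2^2 + a5^2 * a2^2 * a3^2 + a2^2 * a3^2 * a4^2
        + a3^2 * a4^2 * a1^2 + a4^2 * a1^2 * a5^2)"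
proof -
  note pos = assms(1-5)
  define u1 where "u1 = a1*a4*a3/(a2*a5)"
  define u2 where "u2 = a2*a5*a1/(a4*a3)"
  define u3 where "u3 = a4*a3*a2/(a5*a1)"
  define u4 where "u4 = a5*a1*a4/(a3*a2)"
  define u5 where "u5 = a3*a2*a5/(a1*a4)"
  have u: "u1 > 0" "u2 > 0" "u3 > 0" "u4 > 0" "u5 > 0"
    unfolding u1_def u2_def u3_def u4_def u5_def using pos by simp_all
  have p12: "u1*u2 = a1^2" unfolding u1_def u2_def using pos by (simp add: field_simps power2_eq_square)
  have p23: "u2*u3 = a2^2" unfolding u3_def u2_def using pos by (simp add: field_simps power2_eq_square)
  have p34: "u3*u4 = a4^2" unfolding u3_def u4_def using pos by (simp add: field_simps power2_eq_square)
  have p45: "u4*u5 = a5^2" unfolding u5_def u4_def using pos by (simp add: field_simps power2_eq_square)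
  have p51: "u5*u1 = a3^2" unfolding u5_def u1_def using pos by (simp add: field_simps power2_eq_square)
  have sm: "\<And>u v a. u*v = a^2 \<Longrightarrow> a > 0 \<Longrightarrow> sqrt u * sqrt v = (a::real)"
    by (metis real_sqrt_mult real_sqrt_abs abs_of_pos)
  have "a1 * cos \<alpha>1 + a2 * cos \<alpha>2 + a4 * cos \<alpha>4 + a5 * cos \<alpha>5 + a3 * cos \<alpha>3
     \<le> (1 + sqrt 5) / 4 * ((sqrt u1)^2 + (sqrt u2)^2 + (sqrt u3)^2 + (sqrt u4)^2 + (sqrt u5)^2)"
  proof -
    have "\<alpha>1 + \<alpha>2 + \<alpha>4 + \<alpha>5 + \<alpha>3 = pi" using assms(11) by linarith
    from cyc[OF this, of "sqrt u1" "sqrt u2" "sqrt u3" "sqrt u4" "sqrt u5"]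
    show ?thesis
      by (simp only: sm[OF p12 pos(1)] sm[OF p23 pos(2)] sm[OF p34 pos(4)] sm[OF p45 pos(5)] sm[OF p51 pos(3)])
  qed
  also have "(sqrt u1)^2 + (sqrt u2)^2 + (sqrt u3)^2 + (sqrt u4)^2 + (sqrt u5)^2
     = u1 + u2 + u3 + u4 + u5" using u by simp
  also have "u1 + u2 + u3 + u4 + u5 = (1 / (a1 * a2 * a3 * a4 * a5)) *
       (a1^2 * a5^2 * a2^2 + a5^2 * a2^2 * a3^2 + a2^2 * a3^2 * a4^2
        + a3^2 * a4^2 * a1^2 + a4^2 * a1^2 * a5^2)"
    unfolding u1_def u2_def u3_def u4_def u5_def using pos
    by (simp add: field_simps power2_eq_square)
  finally show ?thesis by (simp add: algebra_simps)
qed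

end
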